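(* Let $i,j,k$ be distinct jobs such that $(i,j)$ and $(i,k)$ are red pairs and $t_j\le t_k$. Then $D^*(j,k)\ge(\nu+\nu^2)t_k$ and, in the schedule produced by $1$-SORT, $D(j,k)\le\left(1+\frac{1}{\nu+\nu^2}\right)D^*(j,k)$.
   Context: Setting: single machine, jobs $J=\{1,\dots,n\}$, each job $j$ with test time $t_j\ge0$ and processing time $p_j\ge0$ (revealed only when the test is executed); each job's test must be executed before its processing part, which may start any time after the test; operations are non-preemptive and the machine does one at a time. $\sigma_j=t_j+p_j$, $m_j=\max\{t_j,p_j\}$. Standing assumption (general position): no two of the $3n$ numbers $t_j,p_j,\sigma_j$ are equal. Algorithm $1$-SORT: keep a priority queue of available operations, initially the test of every job $j$ with priority $t_j$; repeatedly remove a minimum-priority operation and execute it immediately; after executing the test of $j$, insert the processing part of $j$ with priority $p_j$. For distinct jobs $j,k$, let $d_{k,j}$ be the total amount of time during which operations of $k$ are executed before the completion time of $j$, and $D(j,k)=d_{j,k}+d_{k,j}$, evaluated for the $1$-SORT schedule; $D^*(j,k)=\min\{\sigma_j,\sigma_k\}$. Fix constants $\mu>1$ and $0<\nu<1$ with $\mu\nu>1$ and $1+\frac1\mu\le\nu+\nu^2$. A job $j$ is imbalanced if $m_j\ge\mu\min\{t_j,p_j\}$. For distinct jobs $j,k$, the ordered pair $(j,k)$ is a red pair if $j$ is imbalanced, $m_j\ge t_k\ge\nu m_j$, and $p_k\ge\nu t_k$. *)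

theory Defs
  imports Complex_Main
begin

text \<open>An operation is a pair (j, b): b = False is the test of job j,
  b = True is the processing part of job j.\<close>

type_synonym 'a op = "'a \<times> bool"

definition dur :: "('a \<Rightarrow> real) \<Rightarrow> ('a \<Rightarrow> real) \<Rightarrow> 'a op \<Rightarrow> real" where
  "dur t p x = (if snd x then p (fst x) else t (fst x))"

text \<open>Simulation of 1-SORT: Q is the priority queue (set of available operations);
  the priority of an operation equals its length.  The result is the execution order; operations
  are executed back to back (no idle time).\<close>

primrec run :: "('a \<Rightarrow> real) \<Rightarrow> ('a \<Rightarrow> real) \<Rightarrow> nat \<Rightarrow> 'a op set \<Rightarrow> 'a op list" where
  "run t p 0 Q = []"
| "run t p (Suc m) Q =
     (if Q = {} then []
      else (let x = (ARG_MIN (dur t p) y. y \<in> Q)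
            in x # run t p m ((Q - {x}) \<union> (if snd x then {} else {(fst x, True)}))))"

definition sort1 :: "'a set \<Rightarrow> ('a \<Rightarrow> real) \<Rightarrow> ('a \<Rightarrow> real) \<Rightarrow> 'a op list" where
  "sort1 J t p = run t p (2 * card J) ((\<lambda>j. (j, False)) ` J)"

definition dd :: "'a set \<Rightarrow> ('a \<Rightarrow> real) \<Rightarrow> ('a \<Rightarrow> real) \<Rightarrow> 'a \<Rightarrow> 'a \<Rightarrow> real" where
  "dd J t p k j =
     sum_list (map (dur t p)
       (filter (\<lambda>x. fst x = k) (takeWhile (\<lambda>x. x \<noteq> (j, True)) (sort1 J t p))))"

definition DD :: "'a set \<Rightarrow> ('a \<Rightarrow> real) \<Rightarrow> ('a \<Rightarrow> real) \<Rightarrow> 'a \<Rightarrow> 'a \<Rightarrow> real" where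
  "DD J t p j k = dd J t p j k + dd J t p k j"

definition Dstar :: "('a \<Rightarrow> real) \<Rightarrow> ('a \<Rightarrow> real) \<Rightarrow> 'a \<Rightarrow> 'a \<Rightarrow> real" where
  "Dstar t p j k = min (t j + p j) (t k + p k)"

definition general_position :: "'a set \<Rightarrow> ('a \<Rightarrow> real) \<Rightarrow> ('a \<Rightarrow> real) \<Rightarrow> bool" where
  "general_position J t p \<longleftrightarrow>
     (\<forall>j\<in>J. \<forall>k\<in>J.
        t j \<noteq> p k \<and> t j \<noteq> t k + p k \<and> p j \<noteq> t k + p k \<and>
        (j \<noteq> k \<longrightarrow> t j \<noteq> t k \<and> p j \<noteq> p k \<and> t j + p j \<noteq> t k + p k))"

definition imbalanced :: "real \<Rightarrow> ('a \<Rightarrow> real) \<Rightarrow> ('a \<Rightarrow> real) \<Rightarrow> 'a \<Rightarrow> bool" where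
  "imbalanced \<mu> t p j \<longleftrightarrow> max (t j) (p j) \<ge> \<mu> * min (t j) (p j)"

definition red_pair :: "real \<Rightarrow> real \<Rightarrow> ('a \<Rightarrow> real) \<Rightarrow> ('a \<Rightarrow> real) \<Rightarrow> 'a \<Rightarrow> 'a \<Rightarrow> bool" where
  "red_pair \<mu> \<nu> t p j k \<longleftrightarrow>
     j \<noteq> k \<and> imbalanced \<mu> t p j \<and>
     max (t j) (p j) \<ge> t k \<and> t k \<ge> \<nu> * max (t j) (p j) \<and> p k \<ge> \<nu> * t k"

end

theory Submission
  imports Defs
begin

definition amin :: "('a \<Rightarrow> real) \<Rightarrow> ('a \<Rightarrow> real) \<Rightarrow> 'a op set \<Rightarrow> 'a op" where
  "amin t p Q = (ARG_MIN (dur t p) y. y \<in> Q)"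
definition nxt :: "('a \<Rightarrow> real) \<Rightarrow> ('a \<Rightarrow> real) \<Rightarrow> 'a op set \<Rightarrow> 'a op set" where
  "nxt t p Q = (Q - {amin t p Q}) \<union> (if snd (amin t p Q) then {} else {(fst (amin t p Q), True)})"

lemma run_Suc: "Q \<noteq> {} \<Longrightarrow> run t p (Suc n) Q = amin t p Q # run t p n (nxt t p Q)"
  by (simp add: amin_def nxt_def Let_def)

lemma amin_prop: "finite Q \<Longrightarrow> Q \<noteq> {} \<Longrightarrow> amin t p Q \<in> Q \<and> (\<forall>y\<in>Q. dur t p (amin t p Q) \<le> dur t p y)"
  using arg_min_if_finite[of Q "dur t p"] unfolding arg_min_on_def amin_def by (auto simp: not_less)

lemma finite_nxt: "finite Q \<Longrightarrow> finite (nxt t p Q)"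
  by (simp add: nxt_def)

lemma run_A: "finite Q \<Longrightarrow> distinct (run t p n Q) \<Longrightarrow> a < b \<Longrightarrow> b < length (run t p n Q)
   \<Longrightarrow> run t p n Q ! b \<in> Q \<Longrightarrow> dur t p (run t p n Q ! a) \<le> dur t p (run t p n Q ! b)"
proof (induction n arbitrary: Q a b)
  case 0
  then show ?case by simp
next
  case (Suc n)
  have Q: "Q \<noteq> {}" using Suc.prems by auto
  note R = run_Suc[OF Q, of t p n]
  show ?case
  proof (cases a)
    case 0
    then show ?thesis using Suc.prems amin_prop[OF Suc.prems(1) Q, of t p] R by auto
  next
    case (Suc a')
    obtain b' where b: "b = Suc b'" using Suc.prems(3) by (cases b) auto
    have ne: "run t p (Suc n) Q ! b \<noteq> amin t p Q"
      using nth_eq_iff_index_eq[OF Suc.prems(2), of 0 b] Suc.prems(4) b R by auto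
    have "run t p n (nxt t p Q) ! b' \<in> nxt t p Q"
      using Suc.prems(5) ne R b by (auto simp: nxt_def)
    then show ?thesis using Suc.IH[of "nxt t p Q" a' b'] Suc.prems R b \<open>a = Suc a'\<close> finite_nxt
      by auto
  qed
qed

lemma run_B: "finite Q \<Longrightarrow> distinct (run t p n Q) \<Longrightarrow> c < a \<Longrightarrow> a < b \<Longrightarrow> b < length (run t p n Q)
   \<Longrightarrow> run t p n Q ! c = (e, False) \<Longrightarrow> run t p n Q ! b = (e, True)
   \<Longrightarrow> dur t p (run t p n Q ! a) \<le> dur t p (run t p n Q ! b)"
proof (induction n arbitrary: Q a b c)
  case 0
  then show ?case by simp
next
  case (Suc n)
  have Q: "Q \<noteq> {}" using Suc.prems by auto
  note R = run_Suc[OF Q, of t p n]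
  obtain a' where a: "a = Suc a'" using Suc.prems(3) by (cases a) auto
  obtain b' where b: "b = Suc b'" using Suc.prems(4) a by (cases b) auto
  show ?case
  proof (cases c)
    case 0
    then have x: "amin t p Q = (e, False)" using Suc.prems(6) R by simp
    have "run t p n (nxt t p Q) ! b' \<in> nxt t p Q"
      using Suc.prems(7) R b x by (auto simp: nxt_def)
    then show ?thesis using run_A[of "nxt t p Q" t p n a' b'] Suc.prems R a b finite_nxt
      by auto
  next
    case (Suc c')
    then show ?thesis using Suc.IH[of "nxt t p Q" c' a' b'] Suc.prems R a b finite_nxt
      by auto
  qed
qed

definition WF :: "'a op set \<Rightarrow> bool" where
  "WF Q \<longleftrightarrow> (\<forall>a. (a, True) \<in> Q \<longrightarrow> (a, False) \<notin> Q)"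

definition ext :: "'a op set \<Rightarrow> 'a op set" where
  "ext Q = Q \<union> {(a, True) | a. (a, False) \<in> Q}"

lemma WF_nxt: "finite Q \<Longrightarrow> Q \<noteq> {} \<Longrightarrow> WF Q \<Longrightarrow> WF (nxt t p Q)"
  using amin_prop[of Q t p] unfolding WF_def nxt_def
  by (cases "amin t p Q") (auto split: if_splits)

lemma ext_nxt: "finite Q \<Longrightarrow> Q \<noteq> {} \<Longrightarrow> ext (nxt t p Q) \<subseteq> ext Q"
  using amin_prop[of Q t p] unfolding ext_def nxt_def
  by (cases "amin t p Q") (auto split: if_splits)

lemma amin_notin: "finite Q \<Longrightarrow> Q \<noteq> {} \<Longrightarrow> WF Q \<Longrightarrow> amin t p Q \<notin> ext (nxt t p Q)"
  using amin_prop[of Q t p] unfolding WF_def ext_def nxt_def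
  by (cases "amin t p Q") (auto split: if_splits)

lemma run_set: "finite Q \<Longrightarrow> set (run t p n Q) \<subseteq> ext Q"
proof (induction n arbitrary: Q)
  case 0 then show ?case by simp
next
  case (Suc n)
  show ?case
  proof (cases "Q = {}")
    case True then show ?thesis by simp
  next
    case False
    have "amin t p Q \<in> ext Q" using amin_prop[OF Suc.prems False, of t p] by (auto simp: ext_def)
    then show ?thesis using run_Suc[OF False, of t p n] Suc.IH[of "nxt t p Q"] finite_nxt[OF Suc.prems]
      ext_nxt[OF Suc.prems False, of t p] by auto
  qed
qed

lemma run_distinct: "finite Q \<Longrightarrow> WF Q \<Longrightarrow> distinct (run t p n Q)"
proof (induction n arbitrary: Q)
  case 0 then show ?case by simp
next
  case (Suc n)
  show ?case
  proof (cases "Q = {}")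
    case True then show ?thesis by simp
  next
    case False
    show ?thesis using run_Suc[OF False, of t p n] Suc.IH[of "nxt t p Q"] finite_nxt[OF Suc.prems(1)]
      WF_nxt[OF Suc.prems(1) False Suc.prems(2)] amin_notin[OF Suc.prems(1) False Suc.prems(2)]
      run_set[of "nxt t p Q" t p n] by auto
  qed
qed

lemma run_C: "finite Q \<Longrightarrow> (e, True) \<notin> Q \<Longrightarrow> distinct (run t p n Q) \<Longrightarrow> b < length (run t p n Q)
  \<Longrightarrow> c < length (run t p n Q) \<Longrightarrow> run t p n Q ! b = (e, True) \<Longrightarrow> run t p n Q ! c = (e, False) \<Longrightarrow> c < b"
proof (induction n arbitrary: Q b c)
  case 0 then show ?case by simp
next
  case (Suc n)
  have Q: "Q \<noteq> {}" using Suc.prems by auto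
  note R = run_Suc[OF Q, of t p n]
  note am = amin_prop[OF Suc.prems(1) Q, of t p]
  obtain b' where b: "b = Suc b'" using Suc.prems(2,6) R am by (cases b) auto
  show ?case
  proof (cases c)
    case 0 then show ?thesis using b by simp
  next
    case (Suc c')
    have ne: "amin t p Q \<noteq> (e, False)"
      using nth_eq_iff_index_eq[OF Suc.prems(3), of 0 c] Suc.prems(5,7) Suc R by auto
    have "(e, True) \<notin> nxt t p Q" using Suc.prems(2) ne unfolding nxt_def
      by (cases "amin t p Q") auto
    then show ?thesis using Suc.IH[of "nxt t p Q" b' c'] finite_nxt[OF Suc.prems(1)] Suc.prems R b Suc
      by auto
  qed
qed

definition pot :: "'a op set \<Rightarrow> nat" where
  "pot Q = card Q + card {y \<in> Q. \<not> snd y}"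

lemma pot_nxt: "finite Q \<Longrightarrow> Q \<noteq> {} \<Longrightarrow> WF Q \<Longrightarrow> Suc (pot (nxt t p Q)) = pot Q"
proof -
  assume f: "finite Q" and ne: "Q \<noteq> {}" and w: "WF Q"
  note am = amin_prop[OF f ne, of t p]
  obtain a b where x: "amin t p Q = (a, b)" by fastforce
  show ?thesis
  proof (cases b)
    case True
    have 1: "nxt t p Q = Q - {(a, True)}" using x True by (simp add: nxt_def)
    have 2: "{y \<in> Q - {(a, True)}. \<not> snd y} = {y \<in> Q. \<not> snd y}" by auto
    show ?thesis unfolding pot_def 1 2 using am x True f
      using card.remove[of Q "(a, True)"] by simp
  next
    case False
    have 1: "nxt t p Q = insert (a, True) (Q - {(a, False)})" using x False by (auto simp: nxt_def)
    have nt: "(a, True) \<notin> Q" using w am x False by (auto simp: WF_def)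
    have 2: "{y \<in> insert (a, True) (Q - {(a, False)}). \<not> snd y} = {y \<in> Q. \<not> snd y} - {(a, False)}" by auto
    have c1: "card (insert (a, True) (Q - {(a, False)})) = card Q"
      using nt f am x False card.remove[of Q "(a, False)"] by simp
    have c2: "Suc (card ({y \<in> Q. \<not> snd y} - {(a, False)})) = card {y \<in> Q. \<not> snd y}"
      using f am x False card.remove[of "{y \<in> Q. \<not> snd y}" "(a, False)"] by simp
    show ?thesis unfolding pot_def 1 2 c1 using c2 by simp
  qed
qed

lemma run_complete: "finite Q \<Longrightarrow> WF Q \<Longrightarrow> pot Q \<le> n \<Longrightarrow> ext Q \<subseteq> set (run t p n Q)"
proof (induction n arbitrary: Q)
  case 0
  then have "Q = {}" by (simp add: pot_def)
  then show ?case by (simp add: ext_def)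
next
  case (Suc n)
  show ?case
  proof (cases "Q = {}")
    case True then show ?thesis by (simp add: ext_def)
  next
    case False
    note am = amin_prop[OF Suc.prems(1) False, of t p]
    have "ext Q \<subseteq> insert (amin t p Q) (ext (nxt t p Q))"
      using am unfolding ext_def nxt_def by (cases "amin t p Q") auto
    then show ?thesis using run_Suc[OF False, of t p n] Suc.IH[of "nxt t p Q"] finite_nxt[OF Suc.prems(1)]
      WF_nxt[OF Suc.prems(1) False Suc.prems(2)] pot_nxt[OF Suc.prems(1) False Suc.prems(2), of t p] Suc.prems(3)
      by auto
  qed
qed


lemma pos_take: "distinct L \<Longrightarrow> a < length L \<Longrightarrow> (L ! a \<in> set (take n L)) = (a < n)"
proof
  assume d: "distinct L" and a: "a < length L" and m: "L ! a \<in> set (take n L)"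
  then obtain b where b: "b < length (take n L)" "take n L ! b = L ! a" by (auto simp: in_set_conv_nth)
  then have "L ! b = L ! a" "b < n" "b < length L" by auto
  then show "a < n" using nth_eq_iff_index_eq[OF d] a by metis
next
  assume "distinct L" "a < length L" "a < n"
  then show "L ! a \<in> set (take n L)" by (auto simp: in_set_conv_nth intro!: exI[of _ a])
qed

lemma tw: "distinct L \<Longrightarrow> i < length L \<Longrightarrow> takeWhile (\<lambda>x. x \<noteq> L ! i) L = take i L"
proof -
  assume d: "distinct L" and i: "i < length L"
  have L: "L = take i L @ L ! i # drop (Suc i) L" using i by (simp add: id_take_nth_drop)
  have "\<forall>x\<in>set (take i L). x \<noteq> L ! i" using pos_take[OF d i, of i] by auto
  then have "takeWhile (\<lambda>x. x \<noteq> L ! i) (take i L @ L ! i # drop (Suc i) L) = take i L"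
    by (simp add: takeWhile_append2)
  then show ?thesis using L by metis
qed

lemma dd_formula:
  assumes d: "distinct L" and i: "i < length L" "L ! i = (j, True)"
    and ia: "ia < length L" "L ! ia = (k, False)" and ib: "ib < length L" "L ! ib = (k, True)"
  shows "sum_list (map (dur t p) (filter (\<lambda>x. fst x = k) (takeWhile (\<lambda>x. x \<noteq> (j, True)) L)))
     = (if ia < i then t k else 0) + (if ib < i then p k else 0)"
proof -
  have tw1: "takeWhile (\<lambda>x. x \<noteq> (j, True)) L = take i L" using tw[OF d i(1)] i(2) by simp
  have dist: "distinct (filter (\<lambda>x. fst x = k) (take i L))" using d by simp
  have ma: "(k, False) \<in> set (take i L) \<longleftrightarrow> ia < i" using pos_take[OF d ia(1)] ia(2) by simp
  have mb: "(k, True) \<in> set (take i L) \<longleftrightarrow> ib < i" using pos_take[OF d ib(1)] ib(2) by simp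
  have S: "set (filter (\<lambda>x. fst x = k) (take i L)) =
     (if ia < i then {(k, False)} else {}) \<union> (if ib < i then {(k, True)} else {})"
  proof -
    have "\<And>x. fst x = k \<Longrightarrow> x = (k, False) \<or> x = (k, True)" by (metis (full_types) prod.collapse)
    then show ?thesis using ma mb by (auto, (metis (full_types))+)
  qed
  show ?thesis unfolding tw1 sum_list_distinct_conv_sum_set[OF dist] S
    by (auto simp: dur_def)
qed

theorem mainTheorem9:
  fixes J :: "'a set" and t p :: "'a \<Rightarrow> real" and \<mu> \<nu> :: real and i j k :: 'a
  assumes "finite J"
    and "\<forall>x\<in>J. t x \<ge> 0 \<and> p x \<ge> 0"
    and "general_position J t p"
    and "\<mu> > 1" and "0 < \<nu>" and "\<nu> < 1" and "\<mu> * \<nu> > 1"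
    and "1 + 1 / \<mu> \<le> \<nu> + \<nu>\<^sup>2"
    and "i \<in> J" and "j \<in> J" and "k \<in> J"
    and "i \<noteq> j" and "i \<noteq> k" and "j \<noteq> k"
    and "red_pair \<mu> \<nu> t p i j" and "red_pair \<mu> \<nu> t p i k"
    and "t j \<le> t k"
  shows "Dstar t p j k \<ge> (\<nu> + \<nu>\<^sup>2) * t k \<and>
         DD J t p j k \<le> (1 + 1 / (\<nu> + \<nu>\<^sup>2)) * Dstar t p j k"

proof -
  define Q0 where "Q0 = (\<lambda>j. (j, False)) ` J"
  define L where "L = sort1 J t p"
  have L0: "L = run t p (2 * card J) Q0" by (simp add: L_def Q0_def sort1_def)
  have fQ: "finite Q0" using assms(1) by (simp add: Q0_def)
  have wQ: "WF Q0" by (auto simp: WF_def Q0_def)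
  have cQ: "card Q0 = card J" unfolding Q0_def by (rule card_image) (auto simp: inj_on_def)
  have "{y \<in> Q0. \<not> snd y} = Q0" by (auto simp: Q0_def)
  then have pQ: "pot Q0 = 2 * card J" using cQ by (simp add: pot_def)
  have dL: "distinct L" using run_distinct[OF fQ wQ] L0 by simp
  have cL: "ext Q0 \<subseteq> set L" using run_complete[OF fQ wQ, of "2 * card J" t p] pQ L0 by simp
  have "(j, False) \<in> set L" "(j, True) \<in> set L" "(k, False) \<in> set L" "(k, True) \<in> set L"
    using cL assms(10,11) by (auto simp: ext_def Q0_def)
  then obtain TJ PJ TK PK where
    TJ: "TJ < length L" "L ! TJ = (j, False)" and PJ: "PJ < length L" "L ! PJ = (j, True)" and
    TK: "TK < length L" "L ! TK = (k, False)" and PK: "PK < length L" "L ! PK = (k, True)"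
    by (metis in_set_conv_nth)
  have nT: "\<And>e. (e, True) \<notin> Q0" by (auto simp: Q0_def)
  have TJPJ: "TJ < PJ" using run_C[OF fQ nT, of t p "2 * card J" PJ TJ] dL PJ TJ L0 by simp
  have TKPK: "TK < PK" using run_C[OF fQ nT, of t p "2 * card J" PK TK] dL PK TK L0 by simp
  have gp: "t j \<noteq> t k" using assms(3,10,11,14) by (auto simp: general_position_def)
  have tjk: "t j < t k" using gp assms(17) by simp
  have "TJ \<noteq> TK" using TJ TK assms(14) by auto
  moreover have "\<not> TK < TJ"
  proof
    assume "TK < TJ"
    then have "dur t p (L ! TK) \<le> dur t p (L ! TJ)"
      using run_A[OF fQ, of t p "2 * card J" TK TJ] dL TJ L0 assms(10) by (auto simp: Q0_def)
    then show False using TK TJ tjk by (simp add: dur_def)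
  qed
  ultimately have TJTK: "TJ < TK" by simp
  have B: "\<And>c a b e. c < a \<Longrightarrow> a < b \<Longrightarrow> b < length L \<Longrightarrow> L ! c = (e, False) \<Longrightarrow> L ! b = (e, True)
     \<Longrightarrow> dur t p (L ! a) \<le> dur t p (L ! b)"
    using run_B[OF fQ] dL L0 by metis
  have A: "\<And>a b. a < b \<Longrightarrow> b < length L \<Longrightarrow> L ! b \<in> Q0 \<Longrightarrow> dur t p (L ! a) \<le> dur t p (L ! b)"
    using run_A[OF fQ] dL L0 by metis
  have ddkj: "dd J t p k j = (if TK < PJ then t k else 0) + (if PK < PJ then p k else 0)"
    unfolding dd_def L_def[symmetric] using dd_formula[OF dL PJ TK PK] by simp
  have ddjk: "dd J t p j k = (if TJ < PK then t j else 0) + (if PJ < PK then p j else 0)"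
    unfolding dd_def L_def[symmetric] using dd_formula[OF dL PK TJ PJ] by simp
  have nn: "t j \<ge> 0" "p j \<ge> 0" "t k \<ge> 0" "p k \<ge> 0" using assms(2,10,11) by auto
  have "PJ \<noteq> PK" using PJ PK assms(14) by auto
  have "PJ \<noteq> TK" using PJ TK by auto
  have Dle: "DD J t p j k \<le> Dstar t p j k + t k"
  proof (cases "PJ < PK")
    case True
    show ?thesis
    proof (cases "TK < PJ")
      case True2: True
      have "t k \<le> p j" using B[OF TJTK True2 PJ(1) TJ(2) PJ(2)] TK PJ by (simp add: dur_def)
      moreover have "p j \<le> p k" using B[OF True2 True PK(1) TK(2) PK(2)] PK PJ by (simp add: dur_def)
      ultimately show ?thesis using True True2 TJPJ ddkj ddjk tjk nn
        by (auto simp: DD_def Dstar_def)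
    next
      case False
      then have "PJ < TK" using \<open>PJ \<noteq> TK\<close> by simp
      then have "p j \<le> t k" using A[OF _ TK(1)] TK PJ assms(11) by (force simp: dur_def Q0_def)
      then show ?thesis using True False TJPJ ddkj ddjk tjk nn
        by (auto simp: DD_def Dstar_def)
    qed
  next
    case False
    then have PKPJ: "PK < PJ" using \<open>PJ \<noteq> PK\<close> by simp
    have TKPJ: "TK < PJ" using TKPK PKPJ by simp
    have "t k \<le> p j" using B[OF TJTK TKPJ PJ(1) TJ(2) PJ(2)] TK PJ by (simp add: dur_def)
    moreover have "p k \<le> p j" using B[OF _ PKPJ PJ(1) TJ(2) PJ(2)] TJTK TKPK PK PJ by (simp add: dur_def)
    ultimately show ?thesis using PKPJ TKPJ TJTK TKPK ddkj ddjk tjk nn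
      by (auto simp: DD_def Dstar_def)
  qed
  define M where "M = max (t i) (p i)"
  have r1: "t j \<ge> \<nu> * M" "p j \<ge> \<nu> * t j" using assms(15) by (auto simp: red_pair_def M_def)
  have r2: "t k \<le> M" "p k \<ge> \<nu> * t k" using assms(16) by (auto simp: red_pair_def M_def)
  have "\<nu> * t k \<le> \<nu> * M" using r2(1) assms(5) by simp
  then have h1: "t j \<ge> \<nu> * t k" using r1 by simp
  have "(1 + \<nu>) * (\<nu> * t k) \<le> (1 + \<nu>) * t j" using h1 assms(5) by (simp add: mult_left_mono)
  then have sj: "t j + p j \<ge> (\<nu> + \<nu>\<^sup>2) * t k" using r1(2)
    by (simp add: algebra_simps power2_eq_square)
  have "\<nu> * (\<nu> * t k) \<le> 1 * (\<nu> * t k)" using assms(5,6) nn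
    by (intro mult_right_mono) auto
  moreover have "\<nu> * t k \<le> 1 * t k" using assms(6) nn by (intro mult_right_mono) auto
  ultimately have sk: "t k + p k \<ge> (\<nu> + \<nu>\<^sup>2) * t k" using r2(2)
    by (simp add: algebra_simps power2_eq_square)
  have D1: "Dstar t p j k \<ge> (\<nu> + \<nu>\<^sup>2) * t k" using sj sk by (simp add: Dstar_def)
  have spos: "\<nu> + \<nu>\<^sup>2 > 0" using assms(5) by (simp add: add_pos_nonneg)
  have "t k \<le> Dstar t p j k / (\<nu> + \<nu>\<^sup>2)" using D1 spos by (simp add: pos_le_divide_eq mult.commute)
  then have "DD J t p j k \<le> Dstar t p j k + Dstar t p j k / (\<nu> + \<nu>\<^sup>2)" using Dle by simp
  also have "\<dots> = (1 + 1 / (\<nu> + \<nu>\<^sup>2)) * Dstar t p j k" by (simp add: algebra_simps)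
  finally show ?thesis using D1 by simp
qed

end
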